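(* Consider the genetic algorithm with adaptive population size (APGA) described in the context, with maximum lifetime parameter $MaxLT$ and an arbitrary initial population size $P(0)\ge 1$. Then for every generation $t \ge MaxLT$, $$P(t) \le 2\,MaxLT + 1.$$
   Context: APGA is a steady-state genetic algorithm in which every individual carries a remaining lifetime (RLT). Parameters: an initial population size $P(0)$ and lifetime bounds $1\le MinLT\le MaxLT$; every individual, whether in the initial population or newly created, is assigned at creation a lifetime (its initial RLT) which is a positive integer between $MinLT$ and $MaxLT$ (the assignment may depend on fitness, e.g. via a bi-linear rule, but never exceeds $MaxLT$). Generation $t\ge 1$ proceeds as follows, starting from the population at the end of generation $t-1$: (1) decrement by 1 the RLT of every member except the best (highest-fitness) member of the population; (2) select 2 individuals, apply crossover and mutation to obtain 2 offspring, evaluate them and insert them into the population; (3) remove from the population all members whose RLT equals 0; (4) assign lifetimes (RLT values) to the 2 new members. $P(t)$ denotes the population size at the end of generation $t$, and $P(0)$ the size of the initial population. *)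

theory Defs
  imports Complex_Main
begin

text \<open>A population state is a pair (P, r): the finite set P of members and their
remaining lifetimes r (only the values on P matter).\<close>

text \<open>b is the best member of P: highest fitness, ties broken by the fixed
linear order on individual identifiers (so the best member is unique).\<close>
definition is_best :: "('i::linorder \<Rightarrow> real) \<Rightarrow> 'i set \<Rightarrow> 'i \<Rightarrow> bool" where
  "is_best fit P b \<longleftrightarrow> b \<in> P \<and>
     (\<forall>x\<in>P. x \<noteq> b \<longrightarrow> fit x < fit b \<or> (fit x = fit b \<and> x < b))"

definition apga_step ::
  "('i::linorder \<Rightarrow> real) \<Rightarrow> nat \<Rightarrow> nat \<Rightarrow> 'i set \<Rightarrow> ('i \<Rightarrow> nat)
     \<Rightarrow> 'i set \<Rightarrow> ('i \<Rightarrow> nat) \<Rightarrow> bool" where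
  "apga_step fit MinLT MaxLT P r P' r' \<longleftrightarrow>
     (\<exists>b o1 o2 d.
        is_best fit P b \<and>
        \<comment> \<open>(1) decrement RLT of every member except the best\<close>
        (\<forall>x\<in>P. d x = (if x = b then r x else r x - 1)) \<and>
        \<comment> \<open>(2) two new (distinct, fresh) offspring are inserted\<close>
        o1 \<notin> P \<and> o2 \<notin> P \<and> o1 \<noteq> o2 \<and>
        \<comment> \<open>(3) members with RLT 0 are removed\<close>
        P' = {x\<in>P. d x \<noteq> 0} \<union> {o1, o2} \<and>
        (\<forall>x\<in>P. d x \<noteq> 0 \<longrightarrow> r' x = d x) \<and>
        \<comment> \<open>(4) lifetimes of the new members lie in [MinLT, MaxLT]\<close>
        r' o1 \<in> {MinLT..MaxLT} \<and> r' o2 \<in> {MinLT..MaxLT})"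

text \<open>A run of APGA: pop t is the population at the end of generation t,
rlt t the corresponding remaining lifetimes.\<close>
definition apga_run ::
  "('i::linorder \<Rightarrow> real) \<Rightarrow> nat \<Rightarrow> nat \<Rightarrow> (nat \<Rightarrow> 'i set) \<Rightarrow> (nat \<Rightarrow> 'i \<Rightarrow> nat) \<Rightarrow> bool" where
  "apga_run fit MinLT MaxLT pop rlt \<longleftrightarrow>
     1 \<le> MinLT \<and> MinLT \<le> MaxLT \<and>
     finite (pop 0) \<and> pop 0 \<noteq> {} \<and>
     (\<forall>x\<in>pop 0. rlt 0 x \<in> {MinLT..MaxLT}) \<and>
     (\<forall>t. apga_step fit MinLT MaxLT (pop t) (rlt t) (pop (Suc t)) (rlt (Suc t)))"

end

theory Submission
  imports Defs
begin

lemma step_new: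
  assumes "apga_step fit m M P r P' r'"
  shows "card (P' - P) \<le> 2 \<and> finite (P' - P)"
proof -
  have "\<exists>a c. P' - P \<subseteq> {a, c}" using assms unfolding apga_step_def by blast
  then obtain a c where s: "P' - P \<subseteq> {a, c}" by blast
  then have "card (P' - P) \<le> card {a, c}" by (intro card_mono) auto
  also have "\<dots> \<le> 2" by (simp add: card_insert_if)
  finally show ?thesis using s finite_subset by blast
qed

lemma step_bound:
  assumes "apga_step fit m M P r P' r'" "\<forall>x\<in>P. r x \<le> M"
  shows "\<forall>x\<in>P'. r' x \<le> M"
proof -
  from assms(1) obtain b o1 o2 d where
    "(\<forall>x\<in>P. d x = (if x = b then r x else r x - 1))"
    "P' = {x\<in>P. d x \<noteq> 0} \<union> {o1, o2}"
    "(\<forall>x\<in>P. d x \<noteq> 0 \<longrightarrow> r' x = d x)"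
    "r' o1 \<in> {m..M}" "r' o2 \<in> {m..M}"
    unfolding apga_step_def by blast
  then show ?thesis using assms(2) by fastforce
qed

lemma step_dec:
  assumes "apga_step fit m M P r P' r'" "x \<in> P" "y \<in> P" "y \<in> P'" "x \<noteq> y"
    "fit y < fit x \<or> (fit y = fit x \<and> y < x)"
  shows "r' y = r y - 1 \<and> r' y \<noteq> 0"
proof -
  from assms(1) obtain b o1 o2 d where
    best: "is_best fit P b" and
    dd: "(\<forall>x\<in>P. d x = (if x = b then r x else r x - 1))" and
    o: "o1 \<notin> P" "o2 \<notin> P" and
    P': "P' = {x\<in>P. d x \<noteq> 0} \<union> {o1, o2}" and
    r': "(\<forall>x\<in>P. d x \<noteq> 0 \<longrightarrow> r' x = d x)"
    unfolding apga_step_def by blast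
  have "y \<noteq> b"
  proof
    assume "y = b"
    with best assms(2,5) have "fit x < fit y \<or> (fit x = fit y \<and> x < y)"
      unfolding is_best_def by blast
    with assms(6) show False by auto
  qed
  with dd assms(3) have "d y = r y - 1" by auto
  moreover have "d y \<noteq> 0" using P' assms(3,4) o by auto
  ultimately show ?thesis using r' assms(3) by auto
qed

theorem theorem2:
  fixes fit :: "'i::linorder \<Rightarrow> real"
    and pop :: "nat \<Rightarrow> 'i set" and rlt :: "nat \<Rightarrow> 'i \<Rightarrow> nat"
  assumes "apga_run fit MinLT MaxLT pop rlt"
    and "t \<ge> MaxLT"
  shows "card (pop t) \<le> 2 * MaxLT + 1"
proof -
  let ?M = MaxLT
  have run: "1 \<le> MinLT" "MinLT \<le> MaxLT" "\<forall>x\<in>pop 0. rlt 0 x \<in> {MinLT..MaxLT}"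
    and step: "\<And>u. apga_step fit MinLT MaxLT (pop u) (rlt u) (pop (Suc u)) (rlt (Suc u))"
    using assms(1) unfolding apga_run_def by auto
  have bound: "\<forall>x\<in>pop u. rlt u x \<le> ?M" for u
  proof (induction u)
    case 0 then show ?case using run(3) by auto
  next
    case (Suc u) then show ?case using step_bound[OF step] by blast
  qed
  define t0 where "t0 = t - ?M"
  have tt: "t = t0 + ?M" using assms(2) t0_def by simp
  define Old where "Old = {x. \<forall>j\<le>?M. x \<in> pop (t0 + j)}"
  have old_uniq: "x = y" if "x \<in> Old" "y \<in> Old" for x y
  proof (rule ccontr)
    assume ne: "x \<noteq> y"
    have key: "\<And>x y. x \<in> Old \<Longrightarrow> y \<in> Old \<Longrightarrow> x \<noteq> y \<Longrightarrow>
       fit y < fit x \<or> (fit y = fit x \<and> y < x) \<Longrightarrow> False"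
    proof -
      fix x y assume xo: "x \<in> Old" and yo: "y \<in> Old" and ne: "x \<noteq> y"
        and bt: "fit y < fit x \<or> (fit y = fit x \<and> y < x)"
      have "k \<le> ?M \<Longrightarrow> rlt (t0 + k) y + k = rlt t0 y \<and> (k \<ge> 1 \<longrightarrow> rlt (t0+k) y \<noteq> 0)" for k
      proof (induction k)
        case 0 then show ?case by simp
      next
        case (Suc k)
        have "x \<in> pop (t0 + k)" "y \<in> pop (t0 + k)" "y \<in> pop (Suc (t0 + k))"
          using xo yo Suc.prems unfolding Old_def by (auto dest: spec[of _ k] spec[of _ "Suc k"])
        from step_dec[OF step this(1,2,3) ne bt] Suc show ?case by auto
      qed
      from this[of ?M] bound[of t0] yo have "rlt (t0 + ?M) y = 0 \<and> (?M \<ge> 1 \<longrightarrow> rlt (t0+?M) y \<noteq> 0)"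
        unfolding Old_def by fastforce
      with run show False by linarith
    qed
    show False
    proof (cases "fit y < fit x \<or> (fit y = fit x \<and> y < x)")
      case True then show ?thesis using key[OF that ne] by blast
    next
      case False
      then have "fit x < fit y \<or> (fit x = fit y \<and> x < y)" using ne by auto
      then show ?thesis using key[OF that(2,1)] ne by blast
    qed
  qed
  have finOld: "finite Old" and cOld: "card Old \<le> 1"
  proof -
    have "Old = {} \<or> (\<exists>a. Old = {a})" using old_uniq by blast
    then show "finite Old" "card Old \<le> 1" by auto
  qed
  define New where "New = (\<Union>j<?M. pop (Suc (t0 + j)) - pop (t0 + j))"
  have sub: "pop t \<subseteq> New \<union> Old"
  proof
    fix x assume xt: "x \<in> pop t"
    show "x \<in> New \<union> Old"
    proof (cases "x \<in> New")
      case False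
      have hh: "j \<le> ?M \<Longrightarrow> x \<in> pop (t - j)" for j
      proof (induction j)
        case 0 then show ?case using xt by simp
      next
        case (Suc j)
        have "t - Suc j = t0 + (?M - Suc j)" "t - j = Suc (t0 + (?M - Suc j))"
          using Suc.prems tt by auto
        moreover have "?M - Suc j < ?M" using Suc.prems by auto
        moreover have "x \<in> pop (Suc (t0 + (?M - Suc j)))" using Suc calculation by simp
        ultimately show ?case using False unfolding New_def by auto
      qed
      have h: "j \<le> ?M \<Longrightarrow> x \<in> pop (t0 + j)" for j
        using hh[of "?M - j"] tt by simp
      then have "x \<in> Old" unfolding Old_def by blast
      then show ?thesis by simp
    qed simp
  qed
  have cNew: "card New \<le> 2 * ?M"
  proof -
    have "card New \<le> (\<Sum>j<?M. card (pop (Suc (t0 + j)) - pop (t0 + j)))"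
      unfolding New_def by (rule card_UN_le) simp
    also have "\<dots> \<le> (\<Sum>j<?M. 2)" by (intro sum_mono conjunct1[OF step_new[OF step]])
    finally show ?thesis by simp
  qed
  have finNew: "finite New"
    unfolding New_def using conjunct2[OF step_new[OF step]] by blast
  have "card (pop t) \<le> card (New \<union> Old)" using sub finNew finOld by (intro card_mono) auto
  also have "\<dots> \<le> card New + card Old" by (rule card_Un_le)
  finally show ?thesis using cNew cOld by linarith
qed

end
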